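(* Let $u_1,u_2\in\mathbb{R}^D$ and let $k\ge1$ be an integer. Let $h:\{1,\dots,D\}\to\{1,\dots,k\}$ be a random hash function with $h(1),\dots,h(D)$ independent and uniformly distributed on $\{1,\dots,k\}$, and set $I_{ij}=1$ if $h(i)=j$ and $I_{ij}=0$ otherwise. Let $r_1,\dots,r_D$ be i.i.d. random variables, independent of $h$, with $E(r_i)=0$, $E(r_i^2)=1$, $E(r_i^3)=0$, $E(r_i^4)=s$. Define $g_{1,j}=\sum_{i=1}^D u_{1,i}r_iI_{ij}$ and $g_{2,j}=\sum_{i=1}^D u_{2,i}r_iI_{ij}$ for $j=1,\dots,k$, and $\hat a_{vw,s}=\sum_{j=1}^k g_{1,j}g_{2,j}$. Then $$E(\hat a_{vw,s})=\sum_{i=1}^D u_{1,i}u_{2,i},$$ $$\mathrm{Var}(\hat a_{vw,s})=(s-1)\sum_{i=1}^D u_{1,i}^2u_{2,i}^2+\frac1k\left[\sum_{i=1}^D u_{1,i}^2\sum_{i=1}^D u_{2,i}^2+\Big(\sum_{i=1}^D u_{1,i}u_{2,i}\Big)^2-2\sum_{i=1}^D u_{1,i}^2u_{2,i}^2\right].$$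
   Context: This is the (generalized) Vowpal Wabbit hashing estimator of the inner product $a=\sum_i u_{1,i}u_{2,i}$; the original VW algorithm corresponds to $r_i$ uniform on $\{-1,1\}$, i.e. $s=1$. *)

theory Defs
  imports "HOL-Probability.Probability"
begin

definition vw_g :: "nat \<Rightarrow> (nat \<Rightarrow> real) \<Rightarrow> (nat \<Rightarrow> 'a \<Rightarrow> nat)
    \<Rightarrow> (nat \<Rightarrow> 'a \<Rightarrow> real) \<Rightarrow> nat \<Rightarrow> 'a \<Rightarrow> real" where
  "vw_g D u h r j \<omega> = (\<Sum>i\<in>{1..D}. u i * r i \<omega> * (if h i \<omega> = j then 1 else 0))"

definition vw_est :: "nat \<Rightarrow> nat \<Rightarrow> (nat \<Rightarrow> real) \<Rightarrow> (nat \<Rightarrow> real)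
    \<Rightarrow> (nat \<Rightarrow> 'a \<Rightarrow> nat) \<Rightarrow> (nat \<Rightarrow> 'a \<Rightarrow> real) \<Rightarrow> 'a \<Rightarrow> real" where
  "vw_est D k u1 u2 h r \<omega> = (\<Sum>j\<in>{1..k}. vw_g D u1 h r j \<omega> * vw_g D u2 h r j \<omega>)"

text \<open>Mutual independence of the whole family h(1),...,h(D), r_1,...,r_D
  (the h(i) take values in nat, the r_i in the reals; independence of the
  generated sigma-algebras, which is exactly what indep_vars unfolds to).\<close>
definition vw_joint_indep :: "'a measure \<Rightarrow> nat \<Rightarrow> (nat \<Rightarrow> 'a \<Rightarrow> nat)
    \<Rightarrow> (nat \<Rightarrow> 'a \<Rightarrow> real) \<Rightarrow> bool" where
  "vw_joint_indep M D h r = prob_space.indep_sets M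
     (\<lambda>x. case x of
            Inl i \<Rightarrow> sets (vimage_algebra (space M) (h i) (count_space UNIV))
          | Inr i \<Rightarrow> sets (vimage_algebra (space M) (r i) borel))
     ({1..D} <+> {1..D})"

end

theory Submission
  imports Defs "HOL-Library.Multiset"
begin


definition mom :: "real \<Rightarrow> nat \<Rightarrow> real" where "mom s n = (if n = 2 then 1 else if n = 4 then s else 0)"
definition R4 :: "real \<Rightarrow> nat \<Rightarrow> nat \<Rightarrow> nat \<Rightarrow> nat \<Rightarrow> real" where
 "R4 s a b c d = (if a = b \<and> b = c \<and> c = d then s else if (a = b \<and> c = d) \<or> (a = c \<and> b = d) \<or> (a = d \<and> b = c) then 1 else 0)"
lemma R4_comb: "(\<Prod>x\<in>set_mset {#a,b,c,d#}. mom s (count {#a,b,c,d#} x)) = R4 s a b c d"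
  by (cases "a=b"; cases "a=c"; cases "a=d"; cases "b=c"; cases "b=d"; cases "c=d") (simp_all add: mom_def R4_def insert_commute)
lemma R2_comb: "(\<Prod>x\<in>set_mset {#a,b#}. mom s (count {#a,b#} x)) = (if a = b then 1 else 0)"
  by (cases "a=b") (simp_all add: mom_def)

lemma sdel: "finite A \<Longrightarrow> (\<Sum>d\<in>A. if d = c \<and> Q then g d else 0) = (if c \<in> A \<and> Q then g c else 0)"
  by (cases Q) (auto simp: sum.delta')
lemma sdel1: "finite A \<Longrightarrow> (\<Sum>d\<in>A. if d = c then g d else 0) = (if c \<in> A then g c else 0)"
  by (auto simp: sum.delta')
lemma sif: "(\<Sum>d\<in>A. if Q then g d else 0) = (if Q then (\<Sum>d\<in>A. g d) else 0)"
  by auto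

lemma prod_sum2: "(\<Sum>a\<in>A. \<Sum>b\<in>A. X a b) * (\<Sum>c\<in>A. \<Sum>d\<in>A. X c d) =
   (\<Sum>a\<in>A. \<Sum>b\<in>A. \<Sum>c\<in>A. \<Sum>d\<in>A. X a b * X c d)" for X :: "nat \<Rightarrow> nat \<Rightarrow> real"
  unfolding sum_distrib_right by (intro sum.cong refl) (simp add: sum_distrib_left)

lemma pow_le_4: "n \<le> 4 \<Longrightarrow> \<bar>(x::real) ^ n\<bar> \<le> 1 + x ^ 4"
proof (cases "\<bar>x\<bar> \<le> 1")
  case True
  assume "n \<le> 4"
  have "\<bar>x\<bar> ^ n \<le> 1" using True by (simp add: power_le_one)
  moreover have "0 \<le> x ^ 4" by (simp add: zero_le_even_power)
  moreover have "\<bar>x ^ n\<bar> = \<bar>x\<bar> ^ n" by (rule power_abs)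
  ultimately show ?thesis by linarith
next
  case False
  assume n: "n \<le> 4"
  have "\<bar>x\<bar> ^ n \<le> \<bar>x\<bar> ^ 4" using False n by (intro power_increasing) auto
  also have "\<dots> = x ^ 4" by (simp add: power_abs[symmetric] zero_le_even_power)
  finally show ?thesis by (simp add: power_abs)
qed


locale vw = prob_space M for M :: "'a measure" +
  fixes D k :: nat and s :: real and h :: "nat \<Rightarrow> 'a \<Rightarrow> nat" and r :: "nat \<Rightarrow> 'a \<Rightarrow> real"
  assumes k1: "k \<ge> 1"
    and h_meas: "\<And>i. i \<in> {1..D} \<Longrightarrow> h i \<in> measurable M (count_space UNIV)"
    and h_unif: "\<And>i. i \<in> {1..D} \<Longrightarrow>
          distr M (count_space UNIV) (h i) = uniform_measure (count_space UNIV) {1..k}"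
    and r_meas: "\<And>i. i \<in> {1..D} \<Longrightarrow> r i \<in> borel_measurable M"
    and indep: "vw_joint_indep M D h r"
    and r_int4: "\<And>i. i \<in> {1..D} \<Longrightarrow> integrable M (\<lambda>\<omega>. r i \<omega> ^ 4)"
    and m1: "\<And>i. i \<in> {1..D} \<Longrightarrow> expectation (r i) = 0"
    and m2: "\<And>i. i \<in> {1..D} \<Longrightarrow> expectation (\<lambda>\<omega>. r i \<omega> ^ 2) = 1"
    and m3: "\<And>i. i \<in> {1..D} \<Longrightarrow> expectation (\<lambda>\<omega>. r i \<omega> ^ 3) = 0"
    and m4: "\<And>i. i \<in> {1..D} \<Longrightarrow> expectation (\<lambda>\<omega>. r i \<omega> ^ 4) = s"
begin

definition Z :: "nat + nat \<Rightarrow> 'a \<Rightarrow> real" where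
  "Z x \<omega> = (case x of Inl i \<Rightarrow> real (h i \<omega>) | Inr i \<Rightarrow> r i \<omega>)"

lemma Z_simps[simp]: "Z (Inl i) = (\<lambda>\<omega>. real (h i \<omega>))" "Z (Inr i) = r i"
  by (auto simp: Z_def fun_eq_iff)

lemma Z_meas: "x \<in> {1..D} <+> {1..D} \<Longrightarrow> Z x \<in> borel_measurable M"
proof -
  assume "x \<in> {1..D} <+> {1..D}"
  then show ?thesis
  proof
    fix i assume i: "i \<in> {1..D}" "x = Inl i"
    have "(\<lambda>\<omega>. real (h i \<omega>)) \<in> borel_measurable M"
      by (rule measurable_compose[OF h_meas[OF i(1)]]) simp
    then show ?thesis using i by simp
  next
    fix i assume i: "i \<in> {1..D}" "x = Inr i"
    then show ?thesis using r_meas[OF i(1)] by simp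
  qed
qed

lemma Z_indep: "indep_vars (\<lambda>_. borel) Z ({1..D} <+> {1..D})"
  unfolding indep_vars_def2
proof (intro conjI ballI)
  fix x assume "x \<in> {1..D} <+> {1..D}"
  then show "random_variable borel (Z x)" by (rule Z_meas)
next
  show "indep_sets (\<lambda>x. {Z x -` A \<inter> space M |A. A \<in> sets borel}) ({1..D} <+> {1..D})"
  proof (rule indep_sets_mono_sets[OF indep[unfolded vw_joint_indep_def]])
    fix x assume "x \<in> {1..D} <+> {1..D}"
    then show "{Z x -` A \<inter> space M |A. A \<in> sets borel} \<subseteq>
       (case x of Inl i \<Rightarrow> sets (vimage_algebra (space M) (h i) (count_space UNIV))
          | Inr i \<Rightarrow> sets (vimage_algebra (space M) (r i) borel))"
    proof
      fix i assume i: "x = Inl i"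
      show ?thesis
      proof safe
        fix A :: "real set"
        have "Z x -` A \<inter> space M = h i -` (real -` A) \<inter> space M" by (auto simp: Z_def i)
        also have "\<dots> \<in> sets (vimage_algebra (space M) (h i) (count_space UNIV))"
          by (rule in_vimage_algebra) simp
        finally show "Z x -` A \<inter> space M \<in> (case x of Inl i \<Rightarrow> sets (vimage_algebra (space M) (h i) (count_space UNIV))
          | Inr i \<Rightarrow> sets (vimage_algebra (space M) (r i) borel))" using i by simp
      qed
    next
      fix i assume i: "x = Inr i"
      show ?thesis
      proof safe
        fix A :: "real set" assume A: "A \<in> sets borel"
        have "Z x -` A \<inter> space M = r i -` A \<inter> space M" by (auto simp: Z_def i)
        also have "\<dots> \<in> sets (vimage_algebra (space M) (r i) borel)"
          by (rule in_vimage_algebra) (rule A)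
        finally show "Z x -` A \<inter> space M \<in> (case x of Inl i \<Rightarrow> sets (vimage_algebra (space M) (h i) (count_space UNIV))
          | Inr i \<Rightarrow> sets (vimage_algebra (space M) (r i) borel))" using i by simp
      qed
    qed
  qed
qed

lemma Z_prod:
  assumes J: "finite J" "J \<subseteq> {1..D} <+> {1..D}"
    and phi: "\<And>x. x \<in> J \<Longrightarrow> \<phi> x \<in> borel_measurable borel"
    and int: "\<And>x. x \<in> J \<Longrightarrow> integrable M (\<lambda>\<omega>. \<phi> x (Z x \<omega>))"
  shows "expectation (\<lambda>\<omega>. \<Prod>x\<in>J. \<phi> x (Z x \<omega>)) = (\<Prod>x\<in>J. expectation (\<lambda>\<omega>. \<phi> x (Z x \<omega>)))"
    and "integrable M (\<lambda>\<omega>. \<Prod>x\<in>J. (\<phi> x (Z x \<omega>) :: real))"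
proof -
  have ind: "indep_vars (\<lambda>_. borel) (\<lambda>x \<omega>. \<phi> x (Z x \<omega>)) J"
    by (rule indep_vars_compose2[OF indep_vars_subset[OF Z_indep J(2)]]) (rule phi)
  show "expectation (\<lambda>\<omega>. \<Prod>x\<in>J. \<phi> x (Z x \<omega>)) = (\<Prod>x\<in>J. expectation (\<lambda>\<omega>. \<phi> x (Z x \<omega>)))"
    by (rule indep_vars_lebesgue_integral[OF J(1) ind int])
  show "integrable M (\<lambda>\<omega>. \<Prod>x\<in>J. (\<phi> x (Z x \<omega>) :: real))"
    by (rule indep_vars_integrable[OF J(1) ind int])
qed


lemma r_pow_int: "i \<in> {1..D} \<Longrightarrow> n \<le> 4 \<Longrightarrow> integrable M (\<lambda>\<omega>. r i \<omega> ^ n)"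
  apply (rule Bochner_Integration.integrable_bound[where f="\<lambda>\<omega>. 1 + r i \<omega> ^ 4"])
  using r_int4 r_meas pow_le_4 by auto

lemma r_mom: "i \<in> {1..D} \<Longrightarrow> 1 \<le> n \<Longrightarrow> n \<le> 4 \<Longrightarrow> expectation (\<lambda>\<omega>. r i \<omega> ^ n) = mom s n"
proof -
  assume i: "i \<in> {1..D}" and n: "1 \<le> n" "n \<le> 4"
  then have "n = 1 \<or> n = 2 \<or> n = 3 \<or> n = 4" by auto
  then show ?thesis using m1[OF i] m2[OF i] m3[OF i] m4[OF i] by (auto simp: mom_def)
qed

lemma r_mset:
  assumes N: "set_mset N \<subseteq> {1..D}" "\<And>x. count N x \<le> 4"
  shows "expectation (\<lambda>\<omega>. \<Prod>x\<in>set_mset N. r x \<omega> ^ count N x) = (\<Prod>x\<in>set_mset N. mom s (count N x))"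
    and "integrable M (\<lambda>\<omega>. \<Prod>x\<in>set_mset N. r x \<omega> ^ count N x)"
proof -
  define \<phi> where "\<phi> y t = t ^ count N (projr y)" for y :: "nat + nat" and t :: real
  have eq: "(\<Prod>x\<in>set_mset N. r x \<omega> ^ count N x) = (\<Prod>y\<in>Inr ` set_mset N. \<phi> y (Z y \<omega>))" for \<omega>
    by (subst prod.reindex) (auto simp: \<phi>_def)
  have J: "finite (Inr ` set_mset N)" "Inr ` set_mset N \<subseteq> {1..D} <+> {1..D}" using N by auto
  have phi: "\<phi> y \<in> borel_measurable borel" for y unfolding \<phi>_def by measurable
  have int: "integrable M (\<lambda>\<omega>. \<phi> y (Z y \<omega>))" if "y \<in> Inr ` set_mset N" for y
    using that N by (auto simp: \<phi>_def intro!: r_pow_int dest!: subsetD[OF N(1)])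
  show "integrable M (\<lambda>\<omega>. \<Prod>x\<in>set_mset N. r x \<omega> ^ count N x)"
    unfolding eq by (rule Z_prod(2)[OF J phi int])
  have "expectation (\<lambda>\<omega>. \<Prod>x\<in>set_mset N. r x \<omega> ^ count N x) =
     (\<Prod>y\<in>Inr ` set_mset N. expectation (\<lambda>\<omega>. \<phi> y (Z y \<omega>)))"
    unfolding eq by (rule Z_prod(1)[OF J phi int])
  also have "\<dots> = (\<Prod>x\<in>set_mset N. mom s (count N x))"
    by (subst prod.reindex) (use N in \<open>auto simp: \<phi>_def intro!: prod.cong r_mom\<close>)
  finally show "expectation (\<lambda>\<omega>. \<Prod>x\<in>set_mset N. r x \<omega> ^ count N x) = (\<Prod>x\<in>set_mset N. mom s (count N x))" .
qed

lemma r4: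
  assumes "a \<in> {1..D}" "b \<in> {1..D}" "c \<in> {1..D}" "d \<in> {1..D}"
  shows "expectation (\<lambda>\<omega>. r a \<omega> * r b \<omega> * r c \<omega> * r d \<omega>) = R4 s a b c d"
    and "integrable M (\<lambda>\<omega>. r a \<omega> * r b \<omega> * r c \<omega> * r d \<omega>)"
proof -
  define N where "N = {#a,b,c,d#}"
  have eq: "r a \<omega> * r b \<omega> * r c \<omega> * r d \<omega> = (\<Prod>x\<in>set_mset N. r x \<omega> ^ count N x)" for \<omega>
    unfolding N_def image_prod_mset_multiplicity[symmetric] by (simp add: mult.assoc)
  have cnt: "count N x \<le> 4" for x
  proof -
    have "count N x \<le> size N" by (rule count_le_size)
    then show ?thesis by (simp add: N_def)
  qed
  have sub: "set_mset N \<subseteq> {1..D}" using assms by (auto simp: N_def)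
  have "expectation (\<lambda>\<omega>. r a \<omega> * r b \<omega> * r c \<omega> * r d \<omega>) = expectation (\<lambda>\<omega>. \<Prod>x\<in>set_mset N. r x \<omega> ^ count N x)"
    by (simp only: eq)
  also have "\<dots> = (\<Prod>x\<in>set_mset N. mom s (count N x))" by (rule r_mset(1)[OF sub cnt])
  also have "\<dots> = R4 s a b c d" unfolding N_def by (rule R4_comb)
  finally show "expectation (\<lambda>\<omega>. r a \<omega> * r b \<omega> * r c \<omega> * r d \<omega>) = R4 s a b c d" .
  show "integrable M (\<lambda>\<omega>. r a \<omega> * r b \<omega> * r c \<omega> * r d \<omega>)"
    unfolding eq by (rule r_mset(2)[OF sub cnt])
qed

lemma r2:
  assumes "a \<in> {1..D}" "b \<in> {1..D}"
  shows "expectation (\<lambda>\<omega>. r a \<omega> * r b \<omega>) = (if a = b then 1 else 0)"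
    and "integrable M (\<lambda>\<omega>. r a \<omega> * r b \<omega>)"
proof -
  define N where "N = {#a,b#}"
  have eq: "r a \<omega> * r b \<omega> = (\<Prod>x\<in>set_mset N. r x \<omega> ^ count N x)" for \<omega>
    unfolding N_def image_prod_mset_multiplicity[symmetric] by (simp add: mult.assoc)
  have cnt: "count N x \<le> 4" for x
  proof -
    have "count N x \<le> size N" by (rule count_le_size)
    then show ?thesis by (simp add: N_def)
  qed
  have sub: "set_mset N \<subseteq> {1..D}" using assms by (auto simp: N_def)
  have "expectation (\<lambda>\<omega>. r a \<omega> * r b \<omega>) = expectation (\<lambda>\<omega>. \<Prod>x\<in>set_mset N. r x \<omega> ^ count N x)"
    by (simp only: eq)
  also have "\<dots> = (\<Prod>x\<in>set_mset N. mom s (count N x))" by (rule r_mset(1)[OF sub cnt])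
  also have "\<dots> = (if a = b then 1 else 0)" unfolding N_def by (rule R2_comb)
  finally show "expectation (\<lambda>\<omega>. r a \<omega> * r b \<omega>) = (if a = b then 1 else 0)" .
  show "integrable M (\<lambda>\<omega>. r a \<omega> * r b \<omega>)"
    unfolding eq by (rule r_mset(2)[OF sub cnt])
qed

definition e :: "nat \<Rightarrow> nat \<Rightarrow> 'a \<Rightarrow> real" where
  "e p q \<omega> = (\<Sum>j\<in>{1..k}. (if h p \<omega> = j then 1 else 0) * (if h q \<omega> = j then 1 else 0))"

lemma e_eq: "e p q \<omega> = (if h p \<omega> = h q \<omega> \<and> h p \<omega> \<in> {1..k} then 1 else 0)"
proof -
  have "e p q \<omega> = (\<Sum>j\<in>{1..k}. if j = h p \<omega> then (if h q \<omega> = h p \<omega> then 1 else 0) else 0)"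
    unfolding e_def by (intro sum.cong) auto
  also have "\<dots> = (if h p \<omega> = h q \<omega> \<and> h p \<omega> \<in> {1..k} then 1 else 0)"
    by (subst sum.delta) auto
  finally show ?thesis .
qed

lemma e_meas: "p \<in> {1..D} \<Longrightarrow> q \<in> {1..D} \<Longrightarrow> e p q \<in> borel_measurable M"
proof -
  assume p: "p \<in> {1..D}" and q: "q \<in> {1..D}"
  note [measurable] = h_meas[OF p] h_meas[OF q]
  show ?thesis unfolding e_def by measurable
qed

lemma e_bound: "\<bar>e p q \<omega>\<bar> \<le> 1"
  by (simp add: e_eq)

lemma e_int: "p \<in> {1..D} \<Longrightarrow> q \<in> {1..D} \<Longrightarrow> integrable M (e p q)"
  by (rule integrable_const_bound[where B=1]) (auto simp: e_bound e_meas)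

lemma prob_h: assumes p: "p \<in> {1..D}"
  shows "prob {\<omega>\<in>space M. h p \<omega> \<in> A} = real (card ({1..k} \<inter> A)) / real k"
proof -
  have "prob {\<omega>\<in>space M. h p \<omega> \<in> A} = measure (distr M (count_space UNIV) (h p)) A"
    by (subst measure_distr[OF h_meas[OF p]]) (auto intro!: arg_cong[where f=prob])
  also have "\<dots> = measure (uniform_measure (count_space UNIV) {1..k}) A" using h_unif[OF p] by simp
  also have "\<dots> = real (card ({1..k} \<inter> A)) / real k"
    using k1 by (subst measure_uniform_measure) (auto simp: measure_count_space)
  finally show ?thesis .
qed

lemma AE_h: "p \<in> {1..D} \<Longrightarrow> AE \<omega> in M. h p \<omega> \<in> {1..k}"
proof -
  assume p: "p \<in> {1..D}"
  have "prob {\<omega>\<in>space M. h p \<omega> \<in> {1..k}} = 1" using k1 by (subst prob_h[OF p]) simp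
  then have "AE \<omega> in M. \<omega> \<in> {\<omega>\<in>space M. h p \<omega> \<in> {1..k}}" by (rule AE_prob_1)
  then show ?thesis by auto
qed

lemma E_ind: assumes p: "p \<in> {1..D}"
  shows "expectation (\<lambda>\<omega>. if h p \<omega> = j then 1 else 0) = (if j \<in> {1..k} then 1 / real k else 0)"
proof -
  have "expectation (\<lambda>\<omega>. if h p \<omega> = j then 1 else 0) = expectation (indicator {\<omega>\<in>space M. h p \<omega> \<in> {j}})"
    by (intro Bochner_Integration.integral_cong) (auto simp: indicator_def)
  also have "\<dots> = prob {\<omega>\<in>space M. h p \<omega> \<in> {j}}"
    by (simp add: Int_absorb2 subset_eq)
  also have "\<dots> = (if j \<in> {1..k} then 1 / real k else 0)"
    by (subst prob_h[OF p]) (simp add: Int_insert_right)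
  finally show ?thesis .
qed

lemma E_e_diff: assumes p: "p \<in> {1..D}" and q: "q \<in> {1..D}" and pq: "p \<noteq> q"
  shows "expectation (e p q) = 1 / real k"
proof -
  define \<phi> where "\<phi> j (x :: nat + nat) t = (if t = real j then 1 else (0::real))" for j x t
  have prodeq: "(if h p \<omega> = j then 1 else 0) * (if h q \<omega> = j then 1 else 0) =
      (\<Prod>x\<in>{Inl p, Inl q}. \<phi> j x (Z x \<omega>))" for j \<omega>
    using pq by (simp add: \<phi>_def)
  have J: "finite {Inl p, Inl q}" "{Inl p, Inl q} \<subseteq> ({1..D} <+> {1..D} :: (nat + nat) set)" using p q by auto
  have phi: "\<phi> j x \<in> borel_measurable borel" for j x unfolding \<phi>_def by measurable
  have int1: "integrable M (\<lambda>\<omega>. \<phi> j x (Z x \<omega>))" if "x \<in> {Inl p, Inl q}" for j x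
  proof -
    have "integrable M (\<lambda>\<omega>. \<phi> j x (Z x \<omega>))"
      apply (rule integrable_const_bound[where B=1])
       apply (simp add: \<phi>_def)
      apply (rule measurable_compose[OF Z_meas phi])
      using that J by auto
    then show ?thesis .
  qed
  have Eprod: "expectation (\<lambda>\<omega>. (if h p \<omega> = j then 1 else 0) * (if h q \<omega> = j then 1 else 0)) =
      (if j \<in> {1..k} then 1 / real k * (1 / real k) else 0)" for j
  proof -
    have "expectation (\<lambda>\<omega>. (if h p \<omega> = j then 1 else 0) * (if h q \<omega> = j then 1 else 0)) =
      (\<Prod>x\<in>{Inl p, Inl q}. expectation (\<lambda>\<omega>. \<phi> j x (Z x \<omega>)))"
      unfolding prodeq by (rule Z_prod(1)[OF J phi int1])
    also have "\<dots> = expectation (\<lambda>\<omega>. if h p \<omega> = j then 1 else 0) * expectation (\<lambda>\<omega>. if h q \<omega> = j then 1 else 0)"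
      using pq by (simp add: \<phi>_def)
    also have "\<dots> = (if j \<in> {1..k} then 1 / real k * (1 / real k) else 0)"
      by (simp add: E_ind[OF p] E_ind[OF q])
    finally show ?thesis .
  qed
  have intj: "integrable M (\<lambda>\<omega>. (if h p \<omega> = j then 1 else 0) * (if h q \<omega> = j then 1 else (0::real)))" for j
    unfolding prodeq by (rule Z_prod(2)[OF J phi int1])
  have "expectation (e p q) = (\<Sum>j\<in>{1..k}. expectation (\<lambda>\<omega>. (if h p \<omega> = j then 1 else 0) * (if h q \<omega> = j then 1 else 0)))"
    unfolding e_def by (rule Bochner_Integration.integral_sum) (rule intj)
  also have "\<dots> = (\<Sum>j\<in>{1..k}. 1 / real k * (1 / real k))"
    by (intro sum.cong) (auto simp: Eprod)
  also have "\<dots> = 1 / real k" using k1 by simp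
  finally show ?thesis .
qed

lemma AE_e_same: "p \<in> {1..D} \<Longrightarrow> AE \<omega> in M. e p p \<omega> = 1"
  by (rule AE_mp[OF AE_h]) (auto simp: e_eq)

lemma block:
  fixes F G :: "(nat + nat \<Rightarrow> real) \<Rightarrow> real"
  assumes F: "F \<in> borel_measurable (PiM (Inr ` {1..D}) (\<lambda>_. borel))"
    and G: "G \<in> borel_measurable (PiM (Inl ` {1..D}) (\<lambda>_. borel))"
    and iF: "integrable M (\<lambda>\<omega>. F (restrict (\<lambda>x. Z x \<omega>) (Inr ` {1..D})))"
    and iG: "integrable M (\<lambda>\<omega>. G (restrict (\<lambda>x. Z x \<omega>) (Inl ` {1..D})))"
  shows "expectation (\<lambda>\<omega>. F (restrict (\<lambda>x. Z x \<omega>) (Inr ` {1..D})) * G (restrict (\<lambda>x. Z x \<omega>) (Inl ` {1..D})))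
      = expectation (\<lambda>\<omega>. F (restrict (\<lambda>x. Z x \<omega>) (Inr ` {1..D}))) * expectation (\<lambda>\<omega>. G (restrict (\<lambda>x. Z x \<omega>) (Inl ` {1..D})))"
    and "integrable M (\<lambda>\<omega>. F (restrict (\<lambda>x. Z x \<omega>) (Inr ` {1..D})) * G (restrict (\<lambda>x. Z x \<omega>) (Inl ` {1..D})))"
proof -
  have "indep_var (PiM (Inr ` {1..D}) (\<lambda>_. borel)) (\<lambda>\<omega>. restrict (\<lambda>x. Z x \<omega>) (Inr ` {1..D}))
                  (PiM (Inl ` {1..D}) (\<lambda>_. borel)) (\<lambda>\<omega>. restrict (\<lambda>x. Z x \<omega>) (Inl ` {1..D}))"
    by (rule indep_var_restrict[OF Z_indep]) auto
  from indep_var_compose[OF this F G]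
  have ind: "indep_var borel (\<lambda>\<omega>. F (restrict (\<lambda>x. Z x \<omega>) (Inr ` {1..D}))) borel (\<lambda>\<omega>. G (restrict (\<lambda>x. Z x \<omega>) (Inl ` {1..D})))"
    by (simp add: comp_def)
  show "expectation (\<lambda>\<omega>. F (restrict (\<lambda>x. Z x \<omega>) (Inr ` {1..D})) * G (restrict (\<lambda>x. Z x \<omega>) (Inl ` {1..D})))
      = expectation (\<lambda>\<omega>. F (restrict (\<lambda>x. Z x \<omega>) (Inr ` {1..D}))) * expectation (\<lambda>\<omega>. G (restrict (\<lambda>x. Z x \<omega>) (Inl ` {1..D})))"
    by (rule indep_var_lebesgue_integral[OF ind iF iG])
  show "integrable M (\<lambda>\<omega>. F (restrict (\<lambda>x. Z x \<omega>) (Inr ` {1..D})) * G (restrict (\<lambda>x. Z x \<omega>) (Inl ` {1..D})))"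
    by (rule indep_var_integrable[OF ind iF iG])
qed

definition eZ :: "(nat + nat \<Rightarrow> real) \<Rightarrow> nat \<Rightarrow> nat \<Rightarrow> real" where
  "eZ f p q = (\<Sum>j\<in>{1..k}. (if f (Inl p) = real j then 1 else 0) * (if f (Inl q) = real j then 1 else 0))"

lemma eZ_e: "p \<in> {1..D} \<Longrightarrow> q \<in> {1..D} \<Longrightarrow> eZ (restrict (\<lambda>x. Z x \<omega>) (Inl ` {1..D})) p q = e p q \<omega>"
  by (simp add: eZ_def e_def)

lemma eZ_meas: assumes "p \<in> {1..D}" "q \<in> {1..D}"
  shows "(\<lambda>f. eZ f p q) \<in> borel_measurable (PiM (Inl ` {1..D}) (\<lambda>_. borel))"
proof -
  have [measurable]: "(\<lambda>f. f (Inl p)) \<in> borel_measurable (PiM (Inl ` {1..D}) (\<lambda>_. borel))"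
     "(\<lambda>f. f (Inl q)) \<in> borel_measurable (PiM (Inl ` {1..D}) (\<lambda>_. borel))"
    using assms by (auto intro!: measurable_component_singleton)
  show ?thesis unfolding eZ_def by measurable
qed

lemma split4:
  assumes U: "a \<in> {1..D}" "b \<in> {1..D}" "c \<in> {1..D}" "d \<in> {1..D}" "p \<in> {1..D}" "q \<in> {1..D}" "v \<in> {1..D}" "w \<in> {1..D}"
  shows "expectation (\<lambda>\<omega>. (r a \<omega> * r b \<omega> * r c \<omega> * r d \<omega>) * (e p q \<omega> * e v w \<omega>)) =
     expectation (\<lambda>\<omega>. r a \<omega> * r b \<omega> * r c \<omega> * r d \<omega>) * expectation (\<lambda>\<omega>. e p q \<omega> * e v w \<omega>)"
   and "integrable M (\<lambda>\<omega>. (r a \<omega> * r b \<omega> * r c \<omega> * r d \<omega>) * (e p q \<omega> * e v w \<omega>))"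
proof -
  define F where "F f = f (Inr a) * f (Inr b) * f (Inr c) * f (Inr d)" for f :: "nat + nat \<Rightarrow> real"
  define G where "G f = eZ f p q * eZ f v w" for f
  have [measurable]: "(\<lambda>f. f (Inr x)) \<in> borel_measurable (PiM (Inr ` {1..D}) (\<lambda>_. borel))" if "x \<in> {a,b,c,d}" for x
    using U that by (auto intro!: measurable_component_singleton)
  have Fm: "F \<in> borel_measurable (PiM (Inr ` {1..D}) (\<lambda>_. borel))" unfolding F_def by measurable
  have Gm: "G \<in> borel_measurable (PiM (Inl ` {1..D}) (\<lambda>_. borel))"
    unfolding G_def using eZ_meas U by measurable
  have Fe: "F (restrict (\<lambda>x. Z x \<omega>) (Inr ` {1..D})) = r a \<omega> * r b \<omega> * r c \<omega> * r d \<omega>" for \<omega>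
    using U by (simp add: F_def)
  have Ge: "G (restrict (\<lambda>x. Z x \<omega>) (Inl ` {1..D})) = e p q \<omega> * e v w \<omega>" for \<omega>
    by (simp only: G_def eZ_e[OF U(5) U(6)] eZ_e[OF U(7) U(8)])
  have iF: "integrable M (\<lambda>\<omega>. F (restrict (\<lambda>x. Z x \<omega>) (Inr ` {1..D})))"
    unfolding Fe using r4(2) U by blast
  have iG: "integrable M (\<lambda>\<omega>. G (restrict (\<lambda>x. Z x \<omega>) (Inl ` {1..D})))"
    unfolding Ge
    by (rule integrable_const_bound[where B=1]) (use U e_meas in \<open>auto simp: abs_mult e_bound intro!: mult_le_one\<close>)
  show "expectation (\<lambda>\<omega>. (r a \<omega> * r b \<omega> * r c \<omega> * r d \<omega>) * (e p q \<omega> * e v w \<omega>)) =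
     expectation (\<lambda>\<omega>. r a \<omega> * r b \<omega> * r c \<omega> * r d \<omega>) * expectation (\<lambda>\<omega>. e p q \<omega> * e v w \<omega>)"
    using block(1)[OF Fm Gm iF iG] unfolding Fe Ge .
  show "integrable M (\<lambda>\<omega>. (r a \<omega> * r b \<omega> * r c \<omega> * r d \<omega>) * (e p q \<omega> * e v w \<omega>))"
    using block(2)[OF Fm Gm iF iG] unfolding Fe Ge .
qed

lemma split2:
  assumes U: "a \<in> {1..D}" "b \<in> {1..D}"
  shows "expectation (\<lambda>\<omega>. (r a \<omega> * r b \<omega>) * e a b \<omega>) =
     expectation (\<lambda>\<omega>. r a \<omega> * r b \<omega>) * expectation (e a b)"
   and "integrable M (\<lambda>\<omega>. (r a \<omega> * r b \<omega>) * e a b \<omega>)"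
proof -
  define F where "F f = f (Inr a) * f (Inr b)" for f :: "nat + nat \<Rightarrow> real"
  define G where "G f = eZ f a b" for f
  have [measurable]: "(\<lambda>f. f (Inr x)) \<in> borel_measurable (PiM (Inr ` {1..D}) (\<lambda>_. borel))" if "x \<in> {a,b}" for x
    using U that by (auto intro!: measurable_component_singleton)
  have Fm: "F \<in> borel_measurable (PiM (Inr ` {1..D}) (\<lambda>_. borel))" unfolding F_def by measurable
  have Gm: "G \<in> borel_measurable (PiM (Inl ` {1..D}) (\<lambda>_. borel))"
    unfolding G_def using eZ_meas U by measurable
  have Fe: "F (restrict (\<lambda>x. Z x \<omega>) (Inr ` {1..D})) = r a \<omega> * r b \<omega>" for \<omega>
    using U by (simp add: F_def)
  have Ge: "G (restrict (\<lambda>x. Z x \<omega>) (Inl ` {1..D})) = e a b \<omega>" for \<omega>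
    by (simp only: G_def eZ_e[OF U(1) U(2)])
  have iF: "integrable M (\<lambda>\<omega>. F (restrict (\<lambda>x. Z x \<omega>) (Inr ` {1..D})))"
    unfolding Fe using r2(2) U by blast
  have iG: "integrable M (\<lambda>\<omega>. G (restrict (\<lambda>x. Z x \<omega>) (Inl ` {1..D})))"
    unfolding Ge using e_int U by blast
  show "expectation (\<lambda>\<omega>. (r a \<omega> * r b \<omega>) * e a b \<omega>) =
     expectation (\<lambda>\<omega>. r a \<omega> * r b \<omega>) * expectation (e a b)"
    using block(1)[OF Fm Gm iF iG] unfolding Fe Ge by simp
  show "integrable M (\<lambda>\<omega>. (r a \<omega> * r b \<omega>) * e a b \<omega>)"
    using block(2)[OF Fm Gm iF iG] unfolding Fe Ge .
qed

lemma e_sq: "e p q \<omega> * e p q \<omega> = e p q \<omega>" and e_sym: "e p q \<omega> * e q p \<omega> = e p q \<omega>"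
  by (auto simp: e_eq)

lemma E_ee_same: "p \<in> {1..D} \<Longrightarrow> q \<in> {1..D} \<Longrightarrow> expectation (\<lambda>\<omega>. e p p \<omega> * e q q \<omega>) = 1"
proof -
  assume p: "p \<in> {1..D}" and q: "q \<in> {1..D}"
  have "expectation (\<lambda>\<omega>. e p p \<omega> * e q q \<omega>) = expectation (\<lambda>\<omega>. 1)"
    by (rule integral_cong_AE) (use e_meas p q AE_e_same[OF p] AE_e_same[OF q] in auto)
  then show ?thesis by (simp add: prob_space)
qed

lemma E_e_same: "p \<in> {1..D} \<Longrightarrow> expectation (e p p) = 1"
proof -
  assume p: "p \<in> {1..D}"
  have "expectation (\<lambda>\<omega>. e p p \<omega> * e p p \<omega>) = 1" by (rule E_ee_same[OF p p])
  then show ?thesis by (simp add: e_sq)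
qed


definition Gq :: "nat \<Rightarrow> nat \<Rightarrow> nat \<Rightarrow> nat \<Rightarrow> real" where
  "Gq a b c d = (if d = c \<and> c = b \<and> b = a then s else 0) + (if d = c \<and> b = a then 1 else 0)
     - (if d = c \<and> c = b \<and> b = a then 1 else 0)
     + 1 / real k * ((if d = b \<and> c = a then 1 else 0) - (if d = c \<and> c = b \<and> b = a then 1 else 0))
     + 1 / real k * ((if d = a \<and> c = b then 1 else 0) - (if d = c \<and> c = b \<and> b = a then 1 else 0))"

lemma quad:
  assumes U: "a \<in> {1..D}" "b \<in> {1..D}" "c \<in> {1..D}" "d \<in> {1..D}"
  shows "expectation (\<lambda>\<omega>. (r a \<omega> * r b \<omega> * r c \<omega> * r d \<omega>) * (e a b \<omega> * e c d \<omega>)) = Gq a b c d"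
proof -
  have eq: "expectation (\<lambda>\<omega>. (r a \<omega> * r b \<omega> * r c \<omega> * r d \<omega>) * (e a b \<omega> * e c d \<omega>)) =
     R4 s a b c d * expectation (\<lambda>\<omega>. e a b \<omega> * e c d \<omega>)"
    using split4(1)[OF U U(1,2,3,4)] r4(1)[OF U] by simp
  show ?thesis
  proof (cases "a = b \<and> c = d")
    case True
    then have ba: "b = a" and dc: "d = c" by auto
    have E: "expectation (\<lambda>\<omega>. e a b \<omega> * e c d \<omega>) = 1" unfolding ba dc by (rule E_ee_same[OF U(1) U(3)])
    show ?thesis unfolding eq E unfolding ba dc by (cases "a = c") (simp_all add: R4_def Gq_def)
  next
    case F1: False
    show ?thesis
    proof (cases "a = c \<and> b = d")
      case True
      then have ca: "c = a" and db: "d = b" by auto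
      have ab: "a \<noteq> b" using F1 True by auto
      have E: "expectation (\<lambda>\<omega>. e a b \<omega> * e c d \<omega>) = 1 / real k"
        unfolding ca db e_sq by (rule E_e_diff[OF U(1,2) ab])
      show ?thesis unfolding eq E unfolding ca db using ab by (simp add: R4_def Gq_def)
    next
      case F2: False
      show ?thesis
      proof (cases "a = d \<and> b = c")
        case True
        then have cb: "c = b" and da: "d = a" by auto
        have ab: "a \<noteq> b" using F1 True by auto
        have E: "expectation (\<lambda>\<omega>. e a b \<omega> * e c d \<omega>) = 1 / real k"
          unfolding cb da e_sym by (rule E_e_diff[OF U(1,2) ab])
        show ?thesis unfolding eq E unfolding cb da using ab by (simp add: R4_def Gq_def)
      next
        case False
        have n: "\<not> (d = c \<and> c = b \<and> b = a)" "\<not> (d = c \<and> b = a)" "\<not> (d = b \<and> c = a)" "\<not> (d = a \<and> c = b)"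
          "\<not> (a = b \<and> b = c \<and> c = d)" "\<not> ((a = b \<and> c = d) \<or> (a = c \<and> b = d) \<or> (a = d \<and> b = c))"
          using F1 F2 False by auto
        have "R4 s a b c d = 0" unfolding R4_def using n by (simp only: if_False)
        moreover have "Gq a b c d = 0" unfolding Gq_def using n by (simp only: if_False) simp
        ultimately show ?thesis unfolding eq by simp
      qed
    qed
  qed
qed

lemma pair:
  assumes U: "a \<in> {1..D}" "b \<in> {1..D}"
  shows "expectation (\<lambda>\<omega>. (r a \<omega> * r b \<omega>) * e a b \<omega>) = (if a = b then 1 else 0)"
  using split2(1)[OF U] r2(1)[OF U] E_e_same[OF U(1)] by (cases "a = b") simp_all

end

lemma pwgen: "(x::real) * ((if P1 then s else 0) + (if P2 then 1 else 0) - (if P1 then 1 else 0)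
   + c * ((if P3 then 1 else 0) - (if P1 then 1 else 0)) + c * ((if P4 then 1 else 0) - (if P1 then 1 else 0)))
  = s * (if P1 then x else 0) + (if P2 then x else 0) - (if P1 then x else 0)
   + c * ((if P3 then x else 0) - (if P1 then x else 0)) + c * ((if P4 then x else 0) - (if P1 then x else 0))"
  by (cases P1; cases P2; cases P3; cases P4) (simp_all add: algebra_simps)

lemma A1: "finite U \<Longrightarrow> (\<Sum>a\<in>U. \<Sum>b\<in>U. \<Sum>c\<in>U. \<Sum>d\<in>U. if d = c \<and> c = b \<and> b = a then (x a * y b * x c * y d) else 0) = (\<Sum>a\<in>U. (x a)^2 * (y a)^2)"
  for x y :: "nat \<Rightarrow> real"
  by (simp add: sdel sdel1 sif power2_eq_square mult_ac cong: sum.cong)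
lemma A2: "finite U \<Longrightarrow> (\<Sum>a\<in>U. \<Sum>b\<in>U. \<Sum>c\<in>U. \<Sum>d\<in>U. if d = c \<and> b = a then (x a * y b * x c * y d) else 0) = (\<Sum>a\<in>U. x a * y a)^2"
  for x y :: "nat \<Rightarrow> real"
  by (simp add: sdel sdel1 sif cong: sum.cong) (simp add: power2_eq_square sum_product mult_ac)
lemma A3: "finite U \<Longrightarrow> (\<Sum>a\<in>U. \<Sum>b\<in>U. \<Sum>c\<in>U. \<Sum>d\<in>U. if d = b \<and> c = a then (x a * y b * x c * y d) else 0) = (\<Sum>a\<in>U. (x a)^2) * (\<Sum>a\<in>U. (y a)^2)"
  for x y :: "nat \<Rightarrow> real"
  by (simp add: sdel sdel1 sif cong: sum.cong) (simp add: power2_eq_square sum_product mult_ac)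
lemma A4: "finite U \<Longrightarrow> (\<Sum>a\<in>U. \<Sum>b\<in>U. \<Sum>c\<in>U. \<Sum>d\<in>U. if d = a \<and> c = b then (x a * y b * x c * y d) else 0) = (\<Sum>a\<in>U. x a * y a)^2"
  for x y :: "nat \<Rightarrow> real"
  by (simp add: sdel sdel1 sif cong: sum.cong) (simp add: power2_eq_square sum_product mult_ac)

lemma lin4: "(\<Sum>a\<in>U. \<Sum>b\<in>U. \<Sum>c\<in>U. \<Sum>d\<in>U. s * f1 a b c d + f2 a b c d - f1 a b c d + q * (f3 a b c d - f1 a b c d) + q * (f4 a b c d - f1 a b c d))
  = s * (\<Sum>a\<in>U. \<Sum>b\<in>U. \<Sum>c\<in>U. \<Sum>d\<in>U. f1 a b c d) + (\<Sum>a\<in>U. \<Sum>b\<in>U. \<Sum>c\<in>U. \<Sum>d\<in>U. f2 a b c d)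
   - (\<Sum>a\<in>U. \<Sum>b\<in>U. \<Sum>c\<in>U. \<Sum>d\<in>U. f1 a b c d)
   + q * ((\<Sum>a\<in>U. \<Sum>b\<in>U. \<Sum>c\<in>U. \<Sum>d\<in>U. f3 a b c d) - (\<Sum>a\<in>U. \<Sum>b\<in>U. \<Sum>c\<in>U. \<Sum>d\<in>U. f1 a b c d))
   + q * ((\<Sum>a\<in>U. \<Sum>b\<in>U. \<Sum>c\<in>U. \<Sum>d\<in>U. f4 a b c d) - (\<Sum>a\<in>U. \<Sum>b\<in>U. \<Sum>c\<in>U. \<Sum>d\<in>U. f1 a b c d))"
  for f1 f2 f3 f4 :: "nat \<Rightarrow> nat \<Rightarrow> nat \<Rightarrow> nat \<Rightarrow> real"
  by (simp only: sum.distrib sum_subtractf sum_distrib_left[symmetric])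
context vw begin

lemma est_exp: "vw_est D k u1 u2 h r \<omega> = (\<Sum>a\<in>{1..D}. \<Sum>b\<in>{1..D}. u1 a * u2 b * (r a \<omega> * r b \<omega> * e a b \<omega>))"
proof -
  have "vw_est D k u1 u2 h r \<omega> = (\<Sum>j\<in>{1..k}. \<Sum>a\<in>{1..D}. \<Sum>b\<in>{1..D}.
      (u1 a * r a \<omega> * (if h a \<omega> = j then 1 else 0)) * (u2 b * r b \<omega> * (if h b \<omega> = j then 1 else 0)))"
    unfolding vw_est_def vw_g_def sum_product ..
  also have "\<dots> = (\<Sum>a\<in>{1..D}. \<Sum>j\<in>{1..k}. \<Sum>b\<in>{1..D}.
      (u1 a * r a \<omega> * (if h a \<omega> = j then 1 else 0)) * (u2 b * r b \<omega> * (if h b \<omega> = j then 1 else 0)))"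
    by (rule sum.swap[where A="{1..k}" and B="{1..D}"])
  also have "\<dots> = (\<Sum>a\<in>{1..D}. \<Sum>b\<in>{1..D}. \<Sum>j\<in>{1..k}.
      (u1 a * r a \<omega> * (if h a \<omega> = j then 1 else 0)) * (u2 b * r b \<omega> * (if h b \<omega> = j then 1 else 0)))"
    by (rule sum.cong[OF refl]) (rule sum.swap[where A="{1..k}" and B="{1..D}"])
  also have "\<dots> = (\<Sum>a\<in>{1..D}. \<Sum>b\<in>{1..D}. u1 a * u2 b * (r a \<omega> * r b \<omega> * e a b \<omega>))"
    by (intro sum.cong refl) (simp add: e_def sum_distrib_left mult_ac)
  finally show ?thesis .
qed

lemma sq_exp: "(vw_est D k u1 u2 h r \<omega>)^2 = (\<Sum>a\<in>{1..D}. \<Sum>b\<in>{1..D}. \<Sum>c\<in>{1..D}. \<Sum>d\<in>{1..D}.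
   (u1 a * u2 b * u1 c * u2 d) * ((r a \<omega> * r b \<omega> * r c \<omega> * r d \<omega>) * (e a b \<omega> * e c d \<omega>)))"
  unfolding power2_eq_square est_exp prod_sum2 by (intro sum.cong refl) (simp add: mult_ac)

lemma est_int: "integrable M (vw_est D k u1 u2 h r)"
  unfolding est_exp[abs_def]
  by (intro Bochner_Integration.integrable_sum integrable_mult_right) (auto intro: split2(2))

lemma sq_int: "integrable M (\<lambda>\<omega>. (vw_est D k u1 u2 h r \<omega>)^2)"
  unfolding sq_exp
  by (intro Bochner_Integration.integrable_sum integrable_mult_right) (auto intro: split4(2))

lemma E_est: "expectation (vw_est D k u1 u2 h r) = (\<Sum>a\<in>{1..D}. u1 a * u2 a)"
proof -
  have "expectation (vw_est D k u1 u2 h r) =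
     (\<Sum>a\<in>{1..D}. expectation (\<lambda>\<omega>. \<Sum>b\<in>{1..D}. u1 a * u2 b * (r a \<omega> * r b \<omega> * e a b \<omega>)))"
    unfolding est_exp[abs_def]
    by (rule Bochner_Integration.integral_sum) (auto intro!: Bochner_Integration.integrable_sum integrable_mult_right intro: split2(2))
  also have "\<dots> = (\<Sum>a\<in>{1..D}. \<Sum>b\<in>{1..D}. u1 a * u2 b * expectation (\<lambda>\<omega>. r a \<omega> * r b \<omega> * e a b \<omega>))"
    by (intro sum.cong refl, subst Bochner_Integration.integral_sum)
       (auto intro!: integrable_mult_right intro: split2(2))
  also have "\<dots> = (\<Sum>a\<in>{1..D}. \<Sum>b\<in>{1..D}. if b = a then u1 a * u2 b else 0)"
    by (intro sum.cong refl) (auto simp: pair)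
  also have "\<dots> = (\<Sum>a\<in>{1..D}. u1 a * u2 a)"
    by (rule sum.cong[OF refl]) (simp add: sdel1)
  finally show ?thesis .
qed

lemma E_sq: "expectation (\<lambda>\<omega>. (vw_est D k u1 u2 h r \<omega>)^2) =
   (\<Sum>a\<in>{1..D}. \<Sum>b\<in>{1..D}. \<Sum>c\<in>{1..D}. \<Sum>d\<in>{1..D}. (u1 a * u2 b * u1 c * u2 d) * Gq a b c d)"
proof -
  have "expectation (\<lambda>\<omega>. (vw_est D k u1 u2 h r \<omega>)^2) =
    expectation (\<lambda>\<omega>. \<Sum>a\<in>{1..D}. \<Sum>b\<in>{1..D}. \<Sum>c\<in>{1..D}. \<Sum>d\<in>{1..D}.
   (u1 a * u2 b * u1 c * u2 d) * ((r a \<omega> * r b \<omega> * r c \<omega> * r d \<omega>) * (e a b \<omega> * e c d \<omega>)))"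
    unfolding sq_exp ..
  also have "\<dots> = (\<Sum>a\<in>{1..D}. expectation (\<lambda>\<omega>. \<Sum>b\<in>{1..D}. \<Sum>c\<in>{1..D}. \<Sum>d\<in>{1..D}.
   (u1 a * u2 b * u1 c * u2 d) * ((r a \<omega> * r b \<omega> * r c \<omega> * r d \<omega>) * (e a b \<omega> * e c d \<omega>))))"
    by (rule Bochner_Integration.integral_sum)
       (auto intro!: Bochner_Integration.integrable_sum integrable_mult_right intro: split4(2))
  also have "\<dots> = (\<Sum>a\<in>{1..D}. \<Sum>b\<in>{1..D}. expectation (\<lambda>\<omega>. \<Sum>c\<in>{1..D}. \<Sum>d\<in>{1..D}.
   (u1 a * u2 b * u1 c * u2 d) * ((r a \<omega> * r b \<omega> * r c \<omega> * r d \<omega>) * (e a b \<omega> * e c d \<omega>))))"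
    by (rule sum.cong[OF refl], rule Bochner_Integration.integral_sum)
       (auto intro!: Bochner_Integration.integrable_sum integrable_mult_right intro: split4(2))
  also have "\<dots> = (\<Sum>a\<in>{1..D}. \<Sum>b\<in>{1..D}. \<Sum>c\<in>{1..D}. expectation (\<lambda>\<omega>. \<Sum>d\<in>{1..D}.
   (u1 a * u2 b * u1 c * u2 d) * ((r a \<omega> * r b \<omega> * r c \<omega> * r d \<omega>) * (e a b \<omega> * e c d \<omega>))))"
    by (rule sum.cong[OF refl], rule sum.cong[OF refl], rule Bochner_Integration.integral_sum)
       (auto intro!: Bochner_Integration.integrable_sum integrable_mult_right intro: split4(2))
  also have "\<dots> = (\<Sum>a\<in>{1..D}. \<Sum>b\<in>{1..D}. \<Sum>c\<in>{1..D}. \<Sum>d\<in>{1..D}. expectation (\<lambda>\<omega>.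
   (u1 a * u2 b * u1 c * u2 d) * ((r a \<omega> * r b \<omega> * r c \<omega> * r d \<omega>) * (e a b \<omega> * e c d \<omega>))))"
    by (rule sum.cong[OF refl], rule sum.cong[OF refl], rule sum.cong[OF refl], rule Bochner_Integration.integral_sum)
       (auto intro!: integrable_mult_right intro: split4(2))
  also have "\<dots> = (\<Sum>a\<in>{1..D}. \<Sum>b\<in>{1..D}. \<Sum>c\<in>{1..D}. \<Sum>d\<in>{1..D}. (u1 a * u2 b * u1 c * u2 d) * Gq a b c d)"
  proof (rule sum.cong[OF refl], rule sum.cong[OF refl], rule sum.cong[OF refl], rule sum.cong[OF refl])
    fix a b c d assume "a \<in> {1..D}" "b \<in> {1..D}" "c \<in> {1..D}" "d \<in> {1..D}"
    then show "expectation (\<lambda>\<omega>.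
   (u1 a * u2 b * u1 c * u2 d) * ((r a \<omega> * r b \<omega> * r c \<omega> * r d \<omega>) * (e a b \<omega> * e c d \<omega>))) =
      (u1 a * u2 b * u1 c * u2 d) * Gq a b c d"
      by (simp only: integral_mult_right_zero quad)
  qed
  finally show ?thesis .
qed

lemma final_sum: "(\<Sum>a\<in>{1..D}. \<Sum>b\<in>{1..D}. \<Sum>c\<in>{1..D}. \<Sum>d\<in>{1..D}. (u1 a * u2 b * u1 c * u2 d) * Gq a b c d)
  = s * (\<Sum>i\<in>{1..D}. (u1 i)^2 * (u2 i)^2) + (\<Sum>i\<in>{1..D}. u1 i * u2 i)^2 - (\<Sum>i\<in>{1..D}. (u1 i)^2 * (u2 i)^2)
    + 1 / real k * ((\<Sum>i\<in>{1..D}. (u1 i)^2) * (\<Sum>i\<in>{1..D}. (u2 i)^2) - (\<Sum>i\<in>{1..D}. (u1 i)^2 * (u2 i)^2))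
    + 1 / real k * ((\<Sum>i\<in>{1..D}. u1 i * u2 i)^2 - (\<Sum>i\<in>{1..D}. (u1 i)^2 * (u2 i)^2))"
proof -
  define cf where "cf a b c d = u1 a * u2 b * u1 c * u2 d" for a b c d
  have pw: "(u1 a * u2 b * u1 c * u2 d) * Gq a b c d =
     s * (if d = c \<and> c = b \<and> b = a then cf a b c d else 0) + (if d = c \<and> b = a then cf a b c d else 0)
     - (if d = c \<and> c = b \<and> b = a then cf a b c d else 0)
     + 1 / real k * ((if d = b \<and> c = a then cf a b c d else 0) - (if d = c \<and> c = b \<and> b = a then cf a b c d else 0))
     + 1 / real k * ((if d = a \<and> c = b then cf a b c d else 0) - (if d = c \<and> c = b \<and> b = a then cf a b c d else 0))"
    for a b c d unfolding cf_def Gq_def by (rule pwgen)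
  show ?thesis
    unfolding pw lin4 unfolding cf_def
    by (simp only: A1 A2 A3 A4 finite_atLeastAtMost)
qed

end

lemma arith_fin: "s * S1 + P^2 - S1 + 1 / x * (QW - S1) + 1 / x * (P^2 - S1) - P^2
   = (s - 1) * S1 + 1 / x * (QW + P^2 - 2 * S1)" for s S1 P QW x :: real
proof -
  define y where "y = 1 / x"
  show ?thesis unfolding y_def[symmetric] by (simp add: algebra_simps)
qed

theorem lemma1_loc:
  assumes "vw M D k s h r"
  shows "prob_space.expectation M (vw_est D k u1 u2 h r) = (\<Sum>i\<in>{1..D}. u1 i * u2 i)
     \<and> prob_space.variance M (vw_est D k u1 u2 h r) =
           (s - 1) * (\<Sum>i\<in>{1..D}. (u1 i)^2 * (u2 i)^2)
         + 1 / real k * ((\<Sum>i\<in>{1..D}. (u1 i)^2) * (\<Sum>i\<in>{1..D}. (u2 i)^2)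
              + (\<Sum>i\<in>{1..D}. u1 i * u2 i)^2
              - 2 * (\<Sum>i\<in>{1..D}. (u1 i)^2 * (u2 i)^2))"
proof -
  interpret vw M D k s h r by (rule assms)
  have V: "variance (vw_est D k u1 u2 h r) = expectation (\<lambda>\<omega>. (vw_est D k u1 u2 h r \<omega>)^2) - (expectation (vw_est D k u1 u2 h r))^2"
    by (rule variance_eq[OF est_int sq_int])
  have V': "variance (vw_est D k u1 u2 h r) =
     s * (\<Sum>i\<in>{1..D}. (u1 i)^2 * (u2 i)^2) + (\<Sum>i\<in>{1..D}. u1 i * u2 i)^2 - (\<Sum>i\<in>{1..D}. (u1 i)^2 * (u2 i)^2)
    + 1 / real k * ((\<Sum>i\<in>{1..D}. (u1 i)^2) * (\<Sum>i\<in>{1..D}. (u2 i)^2) - (\<Sum>i\<in>{1..D}. (u1 i)^2 * (u2 i)^2))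
    + 1 / real k * ((\<Sum>i\<in>{1..D}. u1 i * u2 i)^2 - (\<Sum>i\<in>{1..D}. (u1 i)^2 * (u2 i)^2))
    - (\<Sum>i\<in>{1..D}. u1 i * u2 i)^2"
    by (rule trans[OF V]) (simp only: E_sq E_est final_sum)
  show ?thesis
  proof (rule conjI)
    show "expectation (vw_est D k u1 u2 h r) = (\<Sum>i\<in>{1..D}. u1 i * u2 i)" by (rule E_est)
    show "variance (vw_est D k u1 u2 h r) =
           (s - 1) * (\<Sum>i\<in>{1..D}. (u1 i)^2 * (u2 i)^2)
         + 1 / real k * ((\<Sum>i\<in>{1..D}. (u1 i)^2) * (\<Sum>i\<in>{1..D}. (u2 i)^2)
              + (\<Sum>i\<in>{1..D}. u1 i * u2 i)^2
              - 2 * (\<Sum>i\<in>{1..D}. (u1 i)^2 * (u2 i)^2))"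
      by (rule trans[OF V']) (rule arith_fin)
  qed
qed


theorem lemma1:
  fixes M :: "'a measure" and D k :: nat and s :: real
    and u1 u2 :: "nat \<Rightarrow> real"
    and h :: "nat \<Rightarrow> 'a \<Rightarrow> nat" and r :: "nat \<Rightarrow> 'a \<Rightarrow> real"
  assumes "prob_space M"
    and "k \<ge> 1"
    and h_meas: "\<And>i. i \<in> {1..D} \<Longrightarrow> h i \<in> measurable M (count_space UNIV)"
    and h_unif: "\<And>i. i \<in> {1..D} \<Longrightarrow>
          distr M (count_space UNIV) (h i) = uniform_measure (count_space UNIV) {1..k}"
    and r_meas: "\<And>i. i \<in> {1..D} \<Longrightarrow> r i \<in> borel_measurable M"
    and r_ident: "\<And>i j. i \<in> {1..D} \<Longrightarrow> j \<in> {1..D} \<Longrightarrow> distr M borel (r i) = distr M borel (r j)"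
    and indep: "vw_joint_indep M D h r"
    and r_int4: "\<And>i. i \<in> {1..D} \<Longrightarrow> integrable M (\<lambda>\<omega>. r i \<omega> ^ 4)"
    and m1: "\<And>i. i \<in> {1..D} \<Longrightarrow> prob_space.expectation M (r i) = 0"
    and m2: "\<And>i. i \<in> {1..D} \<Longrightarrow> prob_space.expectation M (\<lambda>\<omega>. r i \<omega> ^ 2) = 1"
    and m3: "\<And>i. i \<in> {1..D} \<Longrightarrow> prob_space.expectation M (\<lambda>\<omega>. r i \<omega> ^ 3) = 0"
    and m4: "\<And>i. i \<in> {1..D} \<Longrightarrow> prob_space.expectation M (\<lambda>\<omega>. r i \<omega> ^ 4) = s"
  shows "prob_space.expectation M (vw_est D k u1 u2 h r) = (\<Sum>i\<in>{1..D}. u1 i * u2 i)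
     \<and> prob_space.variance M (vw_est D k u1 u2 h r) =
           (s - 1) * (\<Sum>i\<in>{1..D}. (u1 i)^2 * (u2 i)^2)
         + 1 / real k * ((\<Sum>i\<in>{1..D}. (u1 i)^2) * (\<Sum>i\<in>{1..D}. (u2 i)^2)
              + (\<Sum>i\<in>{1..D}. u1 i * u2 i)^2
              - 2 * (\<Sum>i\<in>{1..D}. (u1 i)^2 * (u2 i)^2))"
proof -
  have V: "vw M D k s h r"
    by (intro vw.intro vw_axioms.intro) (use assms in auto)
  show ?thesis by (rule lemma1_loc[OF V])
qed

end
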